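(* Let $E_5=(0,I_5,M_5,N_5)$ be an equilibrium of system (S) with $B=0$, $I_5>0$, $M_5\ge 0$, $N_5\ge 0$ (so that necessarily $I_5=b/(m+\mu)$). Then $E_5$ is locally asymptotically stable provided the following three conditions hold: $$\frac{b}{I_5}<\gamma I_5+m+\lambda N_5,$$ $$2n+\frac{3p(M_5+N_5)}{hI_5}+\beta I_5+\delta N_5>r+\delta M_5,$$ $$\Big(r-n-\frac{p(2M_5+N_5)}{hI_5}-\beta I_5-\delta N_5\Big)\Big(\delta M_5-n-\frac{p(M_5+2N_5)}{hI_5}\Big)+\Big(\beta I_5-\frac{pN_5}{hI_5}+\delta N_5\Big)\Big(\frac{pM_5}{hI_5}+\delta M_5-r\Big)>0.$$
   Context: All parameters $b,\lambda,\gamma,m,\mu,r,n,p,h,\beta,\delta,e$ are positive constants. Here $B,I$ denote healthy and infected bees and $M,N$ healthy and infected mites. The model (S) is $$B'=\frac{bB}{B+I}-\lambda BN-\gamma BI-mB,\qquad I'=\frac{bI}{B+I}+\lambda BN+\gamma BI-(m+\mu)I,$$ $$M'=r(M+N)-nM-\frac{p}{h(B+I)}M(M+N)-M(\beta I+\delta N+eB),$$ $$N'=-nN-\frac{p}{h(B+I)}N(M+N)+\beta MI+\delta MN-eNB,$$ considered on the domain $\mathcal{D}^0=\{(B,I,M,N)\in\mathbb{R}^4_+ : B+I\neq 0\}$, where $\mathbb{R}_+=[0,\infty)$. *)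

theory Defs
  imports "HOL-Analysis.Analysis"
begin

type_synonym state = "real \<times> real \<times> real \<times> real"

text \<open>Right-hand side of system (S); state (B, I, M, N).
  Parameters: b, lam (lambda), gam (gamma), m, mu, r, n, p, h, bet (beta), del (delta), e.\<close>
definition bee_rhs ::
  "real \<Rightarrow> real \<Rightarrow> real \<Rightarrow> real \<Rightarrow> real \<Rightarrow> real \<Rightarrow> real \<Rightarrow> real \<Rightarrow> real \<Rightarrow> real \<Rightarrow> real \<Rightarrow> real
   \<Rightarrow> state \<Rightarrow> state" where
  "bee_rhs b lam gam m mu r n p h bet del e = (\<lambda>(B, I, M, N).
     ( b * B / (B + I) - lam * B * N - gam * B * I - m * B,
       b * I / (B + I) + lam * B * N + gam * B * I - (m + mu) * I,
       r * (M + N) - n * M - p / (h * (B + I)) * M * (M + N) - M * (bet * I + del * N + e * B),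
       - n * N - p / (h * (B + I)) * N * (M + N) + bet * M * I + del * M * N - e * N * B))"

definition D0 :: "state set" where
  "D0 = {(B, I, M, N). B \<ge> 0 \<and> I \<ge> 0 \<and> M \<ge> 0 \<and> N \<ge> 0 \<and> B + I \<noteq> 0}"

definition is_solution :: "(state \<Rightarrow> state) \<Rightarrow> state set \<Rightarrow> (real \<Rightarrow> state) \<Rightarrow> bool" where
  "is_solution F D x \<longleftrightarrow>
     (\<forall>t\<ge>0. x t \<in> D \<and> (x has_vector_derivative F (x t)) (at t within {0..}))"

definition locally_asymptotically_stable :: "(state \<Rightarrow> state) \<Rightarrow> state set \<Rightarrow> state \<Rightarrow> bool" where
  "locally_asymptotically_stable F D E \<longleftrightarrow>
     (\<forall>\<epsilon>>0. \<exists>\<delta>>0. \<forall>x. is_solution F D x \<and> dist (x 0) E < \<delta> \<longrightarrow> (\<forall>t\<ge>0. dist (x t) E < \<epsilon>)) \<and>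
     (\<exists>\<eta>>0. \<forall>x. is_solution F D x \<and> dist (x 0) E < \<eta> \<longrightarrow> (x \<longlongrightarrow> E) at_top)"

end

theory Submission
  imports Defs "HOL-Real_Asymp.Real_Asymp"
begin

lemma amgm: fixes e x y :: real assumes "e > 0" shows "2 * x * y \<le> e * x^2 + y^2/e"
proof -
  have "0 \<le> (e * x - y)^2/e" using assms by simp
  also have "(e * x - y)^2/e = e * x^2 + y^2/e - 2 * x * y" using assms
    by (simp add: field_simps power2_eq_square)
  finally show ?thesis by simp
qed

definition DVq :: "real \<Rightarrow> real \<Rightarrow> real \<Rightarrow> real \<Rightarrow> real \<Rightarrow> real \<Rightarrow> real \<Rightarrow> real \<Rightarrow> real \<Rightarrow> real
   \<Rightarrow> real \<Rightarrow> real \<Rightarrow> real \<Rightarrow> real \<Rightarrow> real" where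
  "DVq K1 K2 a11 a12 a21 a22 u v w z k1 k2 k3 k4 =
     2 * K1 * u * k1 + 2 * K2 *  v  *  k2
     + 2 * ((a11 * a22-a12 * a21) * w + a11 * (a11 * w+a12 * z) + a21 * (a21 * w+a22 * z)) * k3
     + 2 * ((a11 * a22-a12 * a21) * z + a12 * (a11 * w+a12 * z) + a22 * (a21 * w+a22 * z)) * k4"

definition Vq :: "real \<Rightarrow> real \<Rightarrow> real \<Rightarrow> real \<Rightarrow> real \<Rightarrow> real \<Rightarrow> real \<Rightarrow> real \<Rightarrow> real \<Rightarrow> real \<Rightarrow> real" where
  "Vq K1 K2 a11 a12 a21 a22 u v w z =
     K1 * u^2 + K2 *  v^2 + (a11 * a22-a12 * a21) * (w^2+z^2) + (a11 * w+a12 * z)^2 + (a21 * w+a22 * z)^2"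

lemma quad_bound:
  fixes lam0 mu0 aa c1 c2 d1 d2 a11 a12 a21 a22 :: real
  assumes l0: "lam0 < 0" and m0: "mu0 > 0" and tr: "a11 + a22 < 0" and dt: "a11 * a22 - a12 * a21 > 0"
  shows "\<exists>K1>0. \<exists>K2>0. \<exists>c>0. \<forall>u v w z.
     DVq K1 K2 a11 a12 a21 a22 u v w z (lam0 * u) (aa * u - mu0 *  v)
        (c1 * u+d1 *  v+a11 * w+a12 * z) (c2 * u+d2 *  v+a21 * w+a22 * z) \<le> -c * (u^2+v^2+w^2+z^2)"
proof -
  define D where "D = a11 * a22 - a12 * a21"
  define T where "T = a11 + a22"
  define F2 where "F2 = a11^2+a12^2+a21^2+a22^2"
  have Dpos: "D > 0" using dt D_def by simp
  have Tneg: "T < 0" using tr T_def by simp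
  have "2 * D \<le> F2"
  proof -
    have "0 \<le> (a11-a22)^2 + (a12+a21)^2" by simp
    thus ?thesis unfolding D_def F2_def by (simp add: power2_eq_square algebra_simps)
  qed
  hence F2pos: "F2 > 0" using Dpos by simp
  define Gu where "Gu = 12 * F2/(-T) * (c1^2+c2^2)"
  define Gv where "Gv = 12 * F2/(-T) * (d1^2+d2^2)"
  define K2 where "K2 = (Gv+1)/mu0"
  define K1 where "K1 = (1 + K2 * aa^2/mu0 + Gu)/(-2 * lam0)"
  define c where "c = min 1 (-T * D^2/F2)"
  have Gu0: "Gu \<ge> 0" unfolding Gu_def using F2pos Tneg by (intro mult_nonneg_nonneg divide_nonneg_pos) auto
  have Gv0: "Gv \<ge> 0" unfolding Gv_def using F2pos Tneg by (intro mult_nonneg_nonneg divide_nonneg_pos) auto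
  have K2pos: "K2 > 0" unfolding K2_def using Gv0 m0 by simp
  have K1pos: "K1 > 0" unfolding K1_def using Gu0 K2pos m0 l0
    by (intro divide_pos_pos) (auto intro!: add_pos_nonneg)
  have cpos: "c > 0" unfolding c_def using Tneg Dpos F2pos by (simp add: divide_neg_pos mult_neg_pos)
  have main: "DVq K1 K2 a11 a12 a21 a22 u v w z (lam0 * u) (aa * u - mu0 *  v)
        (c1 * u+d1 *  v+a11 * w+a12 * z) (c2 * u+d2 *  v+a21 * w+a22 * z) \<le> -c * (u^2+v^2+w^2+z^2)" for u v w z
  proof -
    define s where "s = a11 * w+a12 * z"
    define t where "t = a21 * w+a22 * z"
    define Y where "Y = s^2+t^2"
    define p1 where "p1 = D * w + a11 * s + a21 * t"
    define p2 where "p2 = D * z + a12 * s + a22 * t"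
    define g1 where "g1 = c1 * u+d1 *  v"
    define g2 where "g2 = c2 * u+d2 *  v"
    have eq: "DVq K1 K2 a11 a12 a21 a22 u v w z (lam0 * u) (aa * u - mu0 *  v)
        (c1 * u+d1 *  v+a11 * w+a12 * z) (c2 * u+d2 *  v+a21 * w+a22 * z)
        = 2 * K1 * lam0 * u^2 + 2 * K2 * (aa * u *  v) - 2 * K2 * mu0 *  v^2 + 2 * T * Y + 2 * (p1 * g1+p2 * g2)"
      unfolding DVq_def D_def T_def Y_def p1_def p2_def g1_def g2_def s_def t_def
      by (simp add: power2_eq_square algebra_simps)
    have i1: "(D * w)^2 \<le> (a22^2+a12^2) * Y"
    proof -
      have "(D * w)^2 = (a22 * s - a12 * t)^2" unfolding D_def s_def t_def by (simp add: algebra_simps)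
      moreover have "(a22^2+a12^2) * Y - (a22 * s - a12 * t)^2 = (a22 * t + a12 * s)^2"
        unfolding Y_def by (simp add: power2_eq_square algebra_simps)
      moreover have "0 \<le> (a22 * t + a12 * s)^2" by simp
      ultimately show ?thesis by linarith
    qed
    have i2: "(D * z)^2 \<le> (a11^2+a21^2) * Y"
    proof -
      have "(D * z)^2 = (a11 * t - a21 * s)^2" unfolding D_def s_def t_def by (simp add: algebra_simps)
      moreover have "(a11^2+a21^2) * Y - (a11 * t - a21 * s)^2 = (a11 * s + a21 * t)^2"
        unfolding Y_def by (simp add: power2_eq_square algebra_simps)
      moreover have "0 \<le> (a11 * s + a21 * t)^2" by simp
      ultimately show ?thesis by linarith
    qed
    have Y0: "Y \<ge> 0" unfolding Y_def by simp
    have iD: "D^2 * (w^2+z^2) \<le> F2 * Y"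
    proof -
      have "D^2 * (w^2+z^2) = (D * w)^2 + (D * z)^2" by (simp add: power2_eq_square algebra_simps)
      also have "\<dots> \<le> (a22^2+a12^2) * Y + (a11^2+a21^2) * Y" using i1 i2 by linarith
      also have "\<dots> = F2 * Y" unfolding F2_def by (simp add: algebra_simps)
      finally show ?thesis .
    qed
    have sq3: "(x+y+q)^2 \<le> 3 * (x^2+y^2+q^2)" for x y q :: real
    proof -
      have "0 \<le> (x-y)^2 + (y-q)^2 + (x-q)^2" by simp
      thus ?thesis by (simp add: power2_eq_square algebra_simps)
    qed
    have pp: "p1^2+p2^2 \<le> 6 * F2 * Y"
    proof -
      have "p1^2 \<le> 3 * ((D * w)^2+(a11 * s)^2+(a21 * t)^2)" unfolding p1_def by (rule sq3)
      moreover have "p2^2 \<le> 3 * ((D * z)^2+(a12 * s)^2+(a22 * t)^2)" unfolding p2_def by (rule sq3)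
      moreover have "(D * w)^2 + (D * z)^2 \<le> F2 * Y" using iD by (simp add: power2_eq_square algebra_simps)
      moreover have "(a11 * s)^2+(a21 * t)^2+(a12 * s)^2+(a22 * t)^2 \<le> F2 * Y"
      proof -
        have "(a11 * s)^2+(a21 * t)^2+(a12 * s)^2+(a22 * t)^2 = (a11^2+a12^2) * s^2 + (a21^2+a22^2) * t^2"
          by (simp add: power2_eq_square algebra_simps)
        also have "\<dots> \<le> F2 * s^2 + F2 * t^2"
        proof -
          have "(a11^2+a12^2) * s^2 \<le> F2 * s^2" unfolding F2_def by (intro mult_right_mono) auto
          moreover have "(a21^2+a22^2) * t^2 \<le> F2 * t^2" unfolding F2_def by (intro mult_right_mono) auto
          ultimately show ?thesis by linarith
        qed
        finally show ?thesis unfolding Y_def by (simp add: algebra_simps)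
      qed
      ultimately show ?thesis by (simp only: distrib_left mult.assoc)
    qed
    define ep where "ep = -T/(6 * F2)"
    have ep0: "ep > 0" unfolding ep_def using Tneg F2pos by (simp add: divide_neg_pos)
    have cr1: "2 * p1 * g1 \<le> ep * p1^2 + g1^2/ep" by (rule amgm[OF ep0])
    have cr2: "2 * p2 * g2 \<le> ep * p2^2 + g2^2/ep" by (rule amgm[OF ep0])
    have "ep * (p1^2+p2^2) \<le> ep * (6 * F2 * Y)" using pp ep0 by (intro mult_left_mono) auto
    also have "ep * (6 * F2 * Y) = -T * Y" unfolding ep_def using F2pos by simp
    finally have cr3: "ep * (p1^2+p2^2) \<le> -T * Y" .
    have gg1: "g1^2 \<le> 2 * c1^2 * u^2 + 2 * d1^2 *  v^2"
    proof -
      have "0 \<le> (c1 * u - d1 *  v)^2" by simp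
      thus ?thesis unfolding g1_def by (simp add: power2_eq_square algebra_simps)
    qed
    have gg2: "g2^2 \<le> 2 * c2^2 * u^2 + 2 * d2^2 *  v^2"
    proof -
      have "0 \<le> (c2 * u - d2 *  v)^2" by simp
      thus ?thesis unfolding g2_def by (simp add: power2_eq_square algebra_simps)
    qed
    have "(g1^2+g2^2)/ep \<le> (2 * c1^2 * u^2 + 2 * d1^2 *  v^2 + (2 * c2^2 * u^2 + 2 * d2^2 *  v^2))/ep"
      using gg1 gg2 ep0 by (intro divide_right_mono) auto
    also have "\<dots> = Gu * u^2 + Gv *  v^2" unfolding ep_def Gu_def Gv_def using F2pos Tneg
      by (simp add: field_simps)
    finally have cr4: "(g1^2+g2^2)/ep \<le> Gu * u^2 + Gv *  v^2" .
    have cross: "2 * (p1 * g1+p2 * g2) \<le> -T * Y + Gu * u^2 + Gv *  v^2"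
    proof -
      have "2 * (p1 * g1+p2 * g2) \<le> ep * (p1^2+p2^2) + (g1^2+g2^2)/ep"
        using cr1 cr2 by (simp add: algebra_simps add_divide_distrib)
      thus ?thesis using cr3 cr4 by linarith
    qed
    have uv: "2 * (aa * u *  v) \<le> mu0 *  v^2 + aa^2 * u^2/mu0"
    proof -
      have "2 *  v  *  (aa * u) \<le> mu0 *  v^2 + (aa * u)^2/mu0" by (rule amgm[OF m0])
      thus ?thesis by (simp add: power2_eq_square algebra_simps)
    qed
    have uv2: "2 * K2 * (aa * u *  v) \<le> K2 * mu0 *  v^2 + K2 * aa^2/mu0 * u^2"
    proof -
      have "K2 * (2 * (aa * u *  v)) \<le> K2 * (mu0 *  v^2 + aa^2 * u^2/mu0)" using uv K2pos by (intro mult_left_mono) auto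
      thus ?thesis by (simp add: algebra_simps)
    qed
    have TY: "T * Y \<le> T * D^2/F2 * (w^2+z^2)"
    proof -
      have "D^2/F2 * (w^2+z^2) \<le> Y" using iD F2pos by (simp add: field_simps)
      hence "T * Y \<le> T * (D^2/F2 * (w^2+z^2))" using Tneg by (intro mult_left_mono_neg) auto
      thus ?thesis by simp
    qed
    have lin: "2 * K1 * lam0 = -1 - K2 * aa^2/mu0 - Gu" unfolding K1_def using l0 by (simp add: field_simps)
    have lin2: "K2 * mu0 = Gv + 1" unfolding K2_def using m0 by simp
    have "DVq K1 K2 a11 a12 a21 a22 u v w z (lam0 * u) (aa * u - mu0 *  v)
        (c1 * u+d1 *  v+a11 * w+a12 * z) (c2 * u+d2 *  v+a21 * w+a22 * z)
        \<le> 2 * K1 * lam0 * u^2 + (K2 * mu0 *  v^2 + K2 * aa^2/mu0 * u^2) - 2 * K2 * mu0 *  v^2 + T * Y + Gu * u^2 + Gv *  v^2"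
      unfolding eq using cross uv2 by linarith
    also have "\<dots> = (2 * K1 * lam0 + K2 * aa^2/mu0 + Gu) * u^2 + (Gv - K2 * mu0) * (v^2) + T * Y"
      by (simp add: algebra_simps)
    also have "\<dots> = (- 1) * (u^2) + (- 1) * (v^2) + T * Y" unfolding lin lin2 by simp
    also have "\<dots> \<le> (- 1) * (u^2) + (- 1) * (v^2) + T * D^2/F2 * (w^2+z^2)" using TY by linarith
    also have "\<dots> \<le> -c * (u^2+v^2+w^2+z^2)"
    proof -
      have c1': "c \<le> 1" and c2': "c \<le> -T * D^2/F2" unfolding c_def by auto
      have "c * (u^2+v^2) \<le> 1 * (u^2+v^2)" using c1' by (intro mult_right_mono) auto
      moreover have "c * (w^2+z^2) \<le> (-T * D^2/F2) * (w^2+z^2)" using c2' by (intro mult_right_mono) auto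
      ultimately show ?thesis by (simp add: algebra_simps)
    qed
    finally show ?thesis .
  qed
  show ?thesis using K1pos K2pos cpos main by blast
qed


lemma stay_below:
  fixes \<phi> \<phi>' :: "real \<Rightarrow> real"
  assumes cont: "continuous_on {0..} \<phi>" and start: "\<phi> 0 < L"
    and der: "\<And>t. t > 0 \<Longrightarrow> \<phi> t < L \<Longrightarrow> (\<phi> has_real_derivative \<phi>' t) (at t) \<and> \<phi>' t \<le> 0"
    and t0: "t \<ge> 0"
  shows "\<phi> t < L"
proof (rule ccontr)
  assume "\<not> \<phi> t < L"
  define S where "S = {0..} \<inter> \<phi> -` {L..}"
  have tS: "t \<in> S" using t0 \<open>\<not> \<phi> t < L\<close> unfolding S_def by auto
  have clS: "closed S" unfolding S_def by (rule continuous_closed_preimage[OF cont]) auto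
  have bdd: "bdd_below S" unfolding S_def by (rule bdd_belowI[of _ 0]) auto
  define ts where "ts = Inf S"
  have tsS: "ts \<in> S" unfolding ts_def using closed_contains_Inf[OF _ bdd clS] tS by auto
  have ts0: "ts \<ge> 0" using tsS unfolding S_def by auto
  have "ts \<noteq> 0" using tsS start unfolding S_def by auto
  with ts0 have tspos: "ts > 0" by simp
  have below: "\<phi> s < L" if "0 \<le> s" "s < ts" for s
  proof (rule ccontr)
    assume "\<not> \<phi> s < L"
    hence "s \<in> S" using that unfolding S_def by auto
    hence "ts \<le> s" unfolding ts_def using bdd by (rule cInf_lower)
    thus False using that by simp
  qed
  have "\<phi> ts \<le> \<phi> 0"
  proof (rule DERIV_nonpos_imp_decreasing_open[of 0 ts])
    show "0 \<le> ts" using ts0 .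
    show "continuous_on {0..ts} \<phi>" using cont by (rule continuous_on_subset) auto
    fix x assume "0 < x" "x < ts"
    hence "\<phi> x < L" using below by simp
    thus "\<exists>y. (\<phi> has_real_derivative y) (at x) \<and> y \<le> 0" using der \<open>0 < x\<close> by blast
  qed
  thus False using start tsS unfolding S_def by auto
qed

lemma decay:
  fixes \<phi> \<phi>' :: "real \<Rightarrow> real"
  assumes cont: "continuous_on {0..} \<phi>" and c: "c > 0"
    and der: "\<And>t. t > 0 \<Longrightarrow> (\<phi> has_real_derivative \<phi>' t) (at t) \<and> \<phi>' t \<le> -c  *  \<phi> t"
    and t0: "t \<ge> 0"
  shows "\<phi> t \<le> \<phi> 0  *  exp (-c * t)"
proof -
  define \<psi> where "\<psi> s = \<phi> s  *  exp (c * s)" for s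
  have "\<psi> t \<le> \<psi> 0"
  proof (rule DERIV_nonpos_imp_decreasing_open[of 0 t])
    show "0 \<le> t" using t0 .
    show "continuous_on {0..t} \<psi>" unfolding \<psi>_def
      using cont by (intro continuous_intros) (auto intro: continuous_on_subset)
    fix x assume x: "0 < x" "x < t"
    have d: "(\<psi> has_real_derivative (\<phi>' x  *  exp (c * x) + \<phi> x  *  (exp (c * x)  *  c))) (at x)"
      unfolding \<psi>_def using der[OF x(1)]
      by (auto intro!: derivative_eq_intros)
    have "\<phi>' x  *  exp (c * x) + \<phi> x  *  (exp (c * x)  *  c) = (\<phi>' x + c  *  \<phi> x)  *  exp (c * x)"
      by (simp add: algebra_simps)
    also have "\<dots> \<le> 0" using der[OF x(1)] by (intro mult_nonpos_nonneg) auto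
    finally show "\<exists>y. (\<psi> has_real_derivative y) (at x) \<and> y \<le> 0" using d by blast
  qed
  hence "\<phi> t  *  exp (c * t) \<le> \<phi> 0" unfolding \<psi>_def by simp
  hence "\<phi> t  *  exp (c * t)  *  exp (-c * t) \<le> \<phi> 0  *  exp (-c * t)" by (intro mult_right_mono) auto
  thus ?thesis by (simp add: mult.assoc flip: exp_add)
qed

lemma exp_decay_tendsto: fixes K c :: real assumes "c > 0"
  shows "((\<lambda>t. K  *  exp (-c * t)) \<longlongrightarrow> 0) at_top"
  using assms by real_asymp

lemma lyap_LAS:
  fixes F :: "state \<Rightarrow> state" and D :: "state set" and E :: state
    and V W :: "state \<Rightarrow> real" and \<alpha> \<beta> c \<rho> :: real
  assumes al: "\<alpha> > 0" and be: "\<beta> > 0" and cc: "c > 0" and rh: "\<rho> > 0"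
    and lower: "\<And>x. \<alpha> * (dist x E)^2 \<le> V x" and upper: "\<And>x. V x \<le> \<beta> * (dist x E)^2"
    and decr: "\<And>x. x \<in> D \<Longrightarrow> dist x E < \<rho> \<Longrightarrow> W x \<le> -c * V x"
    and chain: "\<And>x t. is_solution F D x \<Longrightarrow> t \<ge> 0 \<Longrightarrow>
         ((\<lambda>s. V (x s)) has_real_derivative W (x t)) (at t within {0..})"
  shows "locally_asymptotically_stable F D E"
proof -
  have Vnn: "V x \<ge> 0" for x using lower[of x] al by (smt (verit) zero_le_power2 mult_nonneg_nonneg)
  have key: "\<exists>\<delta>>0. \<forall>x. is_solution F D x \<and> dist (x 0) E < \<delta> \<longrightarrow> (\<forall>t\<ge>0. dist (x t) E < \<rho>')"
    if rp: "\<rho>' > 0" "\<rho>' \<le> \<rho>" for \<rho>'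
  proof -
    define k where "k = min 1 (\<alpha>/\<beta>)"
    have k0: "k > 0" unfolding k_def using al be by simp
    have kk: "\<beta> * k^2 \<le> \<alpha>"
    proof -
      have "k * k \<le> 1 * (\<alpha>/\<beta>)" using k0 unfolding k_def by (intro mult_mono) auto
      thus ?thesis using be by (simp add: power2_eq_square field_simps)
    qed
    define \<delta> where "\<delta> = \<rho>' * k / 2"
    have d0: "\<delta> > 0" unfolding \<delta>_def using rp k0 by simp
    have dd: "\<beta> * \<delta>^2 < \<alpha> * \<rho>'^2"
    proof -
      have "\<beta> * \<delta>^2 = (\<beta> * k^2) * \<rho>'^2 / 4" unfolding \<delta>_def by (simp add: power2_eq_square)
      also have "\<dots> \<le> \<alpha> * \<rho>'^2 / 4" using kk by (intro divide_right_mono mult_right_mono) auto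
      also have "\<dots> < \<alpha> * \<rho>'^2" using al rp by simp
      finally show ?thesis .
    qed
    show ?thesis
    proof (intro exI[of _ \<delta>] conjI allI impI d0)
      fix x :: "real \<Rightarrow> state" and t :: real
      assume a: "is_solution F D x \<and> dist (x 0) E < \<delta>" and t0: "0 \<le> t"
      hence sol: "is_solution F D x" by simp
      define \<phi> where "\<phi> s = V (x s)" for s
      have der: "\<And>s. s \<ge> 0 \<Longrightarrow> (\<phi> has_real_derivative W (x s)) (at s within {0..})"
        unfolding \<phi>_def using chain[OF sol] by blast
      have cont: "continuous_on {0..} \<phi>"
        using der by (auto simp: continuous_on_eq_continuous_within intro: DERIV_continuous)
      have st: "\<phi> 0 < \<alpha> * \<rho>'^2"
      proof -
        have "\<phi> 0 \<le> \<beta> * (dist (x 0) E)^2" unfolding \<phi>_def by (rule upper)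
        also have "\<dots> \<le> \<beta> * \<delta>^2" using a be by (intro mult_left_mono power_mono) auto
        finally show ?thesis using dd by simp
      qed
      have inball: "dist (x s) E < \<rho>'" if "\<phi> s < \<alpha> * \<rho>'^2" for s
      proof -
        have "\<alpha> * (dist (x s) E)^2 < \<alpha> * \<rho>'^2" using lower[of "x s"] that unfolding \<phi>_def by simp
        hence "(dist (x s) E)^2 < \<rho>'^2" using al by simp
        thus ?thesis using rp by (smt (verit) power_mono zero_le_dist)
      qed
      have "\<phi> t < \<alpha> * \<rho>'^2"
      proof (rule stay_below[OF cont st _ t0])
        fix s :: real assume s: "s > 0" "\<phi> s < \<alpha> * \<rho>'^2"
        have "at s within {0..} = at s"
          by (rule at_within_interior) (use s in \<open>simp add: interior_real_atLeast\<close>)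
        hence d: "(\<phi> has_real_derivative W (x s)) (at s)" using der[of s] s by simp
        have "x s \<in> D" using sol s unfolding is_solution_def by simp
        moreover have "dist (x s) E < \<rho>" using inball[OF s(2)] rp by simp
        ultimately have "W (x s) \<le> -c * V (x s)" by (rule decr)
        also have "\<dots> \<le> 0" using Vnn cc by (simp add: mult_nonneg_nonneg)
        finally show "(\<phi> has_real_derivative W (x s)) (at s) \<and> W (x s) \<le> 0" using d by simp
      qed
      thus "dist (x t) E < \<rho>'" by (rule inball)
    qed
  qed
  have part1: "\<forall>\<epsilon>>0. \<exists>\<delta>>0. \<forall>x. is_solution F D x \<and> dist (x 0) E < \<delta> \<longrightarrow> (\<forall>t\<ge>0. dist (x t) E < \<epsilon>)"
  proof (intro allI impI)
    fix \<epsilon> :: real assume "\<epsilon> > 0"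
    then obtain \<delta> where "\<delta> > 0" and h: "\<forall>x. is_solution F D x \<and> dist (x 0) E < \<delta> \<longrightarrow> (\<forall>t\<ge>0. dist (x t) E < min \<epsilon> \<rho>)"
      using key[of "min \<epsilon> \<rho>"] rh by auto
    thus "\<exists>\<delta>>0. \<forall>x. is_solution F D x \<and> dist (x 0) E < \<delta> \<longrightarrow> (\<forall>t\<ge>0. dist (x t) E < \<epsilon>)"
      by (meson min_less_iff_conj)
  qed
  obtain \<eta> where eta: "\<eta> > 0" and h: "\<forall>x. is_solution F D x \<and> dist (x 0) E < \<eta> \<longrightarrow> (\<forall>t\<ge>0. dist (x t) E < \<rho>)"
    using key[of \<rho>] rh by auto
  have part2: "\<forall>x. is_solution F D x \<and> dist (x 0) E < \<eta> \<longrightarrow> (x \<longlongrightarrow> E) at_top"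
  proof (intro allI impI)
    fix x :: "real \<Rightarrow> state" assume a: "is_solution F D x \<and> dist (x 0) E < \<eta>"
    hence sol: "is_solution F D x" by simp
    have inb: "\<forall>t\<ge>0. dist (x t) E < \<rho>" using h a by blast
    define \<phi> where "\<phi> s = V (x s)" for s
    have der: "\<And>s. s \<ge> 0 \<Longrightarrow> (\<phi> has_real_derivative W (x s)) (at s within {0..})"
      unfolding \<phi>_def using chain[OF sol] by blast
    have cont: "continuous_on {0..} \<phi>"
      using der by (auto simp: continuous_on_eq_continuous_within intro: DERIV_continuous)
    have bnd: "\<phi> t \<le> \<phi> 0 * exp (-c * t)" if t0: "t \<ge> 0" for t
    proof (rule decay[OF cont cc _ t0])
      fix s :: real assume s: "s > 0"
      have "at s within {0..} = at s"
        by (rule at_within_interior) (use s in \<open>simp add: interior_real_atLeast\<close>)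
      hence d: "(\<phi> has_real_derivative W (x s)) (at s)" using der[of s] s by simp
      have "x s \<in> D" using sol s unfolding is_solution_def by simp
      moreover have "dist (x s) E < \<rho>" using inb s by simp
      ultimately have "W (x s) \<le> -c * V (x s)" by (rule decr)
      thus "(\<phi> has_real_derivative W (x s)) (at s) \<and> W (x s) \<le> -c * \<phi> s" using d unfolding \<phi>_def by simp
    qed
    define K where "K = sqrt (\<phi> 0 / \<alpha>)"
    have K0: "K \<ge> 0" unfolding K_def \<phi>_def using Vnn[of "x 0"] al by (intro real_sqrt_ge_zero divide_nonneg_pos) auto
    have dle: "norm (dist (x t) E) \<le> K * exp (-(c/2) * t)" if t0: "t \<ge> 0" for t
    proof -
      have "\<alpha> * (dist (x t) E)^2 \<le> \<phi> 0 * exp (-c * t)" using lower[of "x t"] bnd[OF t0] unfolding \<phi>_def by linarith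
      hence "(dist (x t) E)^2 \<le> (\<phi> 0 / \<alpha>) * exp (-c * t)" using al by (simp add: field_simps)
      also have "\<dots> = (K * exp (-(c/2) * t))^2"
        unfolding K_def using Vnn[of "x 0"] al
        by (simp add: power_mult_distrib \<phi>_def flip: exp_of_nat_mult)
      finally have "(dist (x t) E)^2 \<le> (K * exp (-(c/2) * t))^2" .
      hence "dist (x t) E \<le> K * exp (-(c/2) * t)"
        by (rule power2_le_imp_le[OF _ mult_nonneg_nonneg[OF K0 exp_ge_zero]])
      thus ?thesis by simp
    qed
    have "((\<lambda>t. dist (x t) E) \<longlongrightarrow> 0) at_top"
    proof (rule Lim_null_comparison)
      show "\<forall>\<^sub>F t in at_top. norm (dist (x t) E) \<le> K * exp (-(c/2) * t)"
        using dle by (intro eventually_at_top_linorderI[of 0]) auto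
      show "((\<lambda>t. K * exp (-(c/2) * t)) \<longlongrightarrow> 0) at_top" using cc by (intro exp_decay_tendsto) simp
    qed
    thus "(x \<longlongrightarrow> E) at_top" by (subst tendsto_dist_iff)
  qed
  show ?thesis unfolding locally_asymptotically_stable_def
    by (intro conjI part1 exI[of _ \<eta>] eta part2)
qed


lemma hvd_fst: "(x has_vector_derivative y) F \<Longrightarrow> ((\<lambda>s. fst (x s)) has_real_derivative fst y) F"
  unfolding has_vector_derivative_def has_field_derivative_def
  by (drule has_derivative_fst, erule has_derivative_eq_rhs) (simp add: fun_eq_iff mult.commute)

lemma hvd_snd: "(x has_vector_derivative y) F \<Longrightarrow> ((\<lambda>s. snd (x s)) has_vector_derivative snd y) F"
  unfolding has_vector_derivative_def
  by (drule has_derivative_snd) simp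

lemma chain_Vq:
  fixes x :: "real \<Rightarrow> state"
  assumes "(x has_vector_derivative y) (at t within S)"
  shows "((\<lambda>s. Vq K1 K2 a11 a12 a21 a22 (fst (x s) - e1) (fst (snd (x s)) - e2)
      (fst (snd (snd (x s))) - e3) (snd (snd (snd (x s))) - e4)) has_real_derivative
     DVq K1 K2 a11 a12 a21 a22 (fst (x t) - e1) (fst (snd (x t)) - e2)
      (fst (snd (snd (x t))) - e3) (snd (snd (snd (x t))) - e4)
      (fst y) (fst (snd y)) (fst (snd (snd y))) (snd (snd (snd y)))) (at t within S)"
proof -
  have d1: "((\<lambda>s. fst (x s)) has_real_derivative fst y) (at t within S)" using hvd_fst[OF assms] .
  have x2: "((\<lambda>s. snd (x s)) has_vector_derivative snd y) (at t within S)" using hvd_snd[OF assms] .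
  have d2: "((\<lambda>s. fst (snd (x s))) has_real_derivative fst (snd y)) (at t within S)" using hvd_fst[OF x2] .
  have x3: "((\<lambda>s. snd (snd (x s))) has_vector_derivative snd (snd y)) (at t within S)" using hvd_snd[OF x2] .
  have d3: "((\<lambda>s. fst (snd (snd (x s)))) has_real_derivative fst (snd (snd y))) (at t within S)" using hvd_fst[OF x3] .
  have x4: "((\<lambda>s. snd (snd (snd (x s)))) has_vector_derivative snd (snd (snd y))) (at t within S)" using hvd_snd[OF x3] .
  have d4: "((\<lambda>s. snd (snd (snd (x s)))) has_real_derivative snd (snd (snd y))) (at t within S)"
    using x4 by (simp add: has_real_derivative_iff_has_vector_derivative)
  show ?thesis unfolding Vq_def
    by (rule derivative_eq_intros d1 d2 d3 d4 refl | simp)+ (simp add: DVq_def algebra_simps power2_eq_square)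
qed

lemma dist4: fixes x y :: state
  shows "(dist x y)^2 = (fst x - fst y)^2 + (fst (snd x) - fst (snd y))^2
     + (fst (snd (snd x)) - fst (snd (snd y)))^2 + (snd (snd (snd x)) - snd (snd (snd y)))^2"
proof -
  obtain a1 a2 a3 a4 where x: "x = (a1,a2,a3,a4)" by (cases x) auto
  obtain b1 b2 b3 b4 where y: "y = (b1,b2,b3,b4)" by (cases y) auto
  show ?thesis unfolding x y by (simp add: dist_norm norm_Pair)
qed

lemma norm4: fixes k :: state
  shows "(norm k)^2 = (fst k)^2 + (fst (snd k))^2 + (fst (snd (snd k)))^2 + (snd (snd (snd k)))^2"
  using dist4[of k 0] by simp


lemma bee_alt: "bee_rhs b lam gam m mu r n p h bet del e = (\<lambda>x.
     ( b  *  fst x / (fst x + fst (snd x)) - lam  *  fst x  *  snd (snd (snd x)) - gam  *  fst x  *  fst (snd x) - m  *  fst x,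
       b  *  fst (snd x) / (fst x + fst (snd x)) + lam  *  fst x  *  snd (snd (snd x)) + gam  *  fst x  *  fst (snd x) - (m + mu)  *  fst (snd x),
       r  *  (fst (snd (snd x)) + snd (snd (snd x))) - n  *  fst (snd (snd x))
         - p / (h  *  (fst x + fst (snd x)))  *  fst (snd (snd x))  *  (fst (snd (snd x)) + snd (snd (snd x)))
         - fst (snd (snd x))  *  (bet  *  fst (snd x) + del  *  snd (snd (snd x)) + e  *  fst x),
       - n  *  snd (snd (snd x)) - p / (h  *  (fst x + fst (snd x)))  *  snd (snd (snd x))  *  (fst (snd (snd x)) + snd (snd (snd x)))
         + bet  *  fst (snd (snd x))  *  fst (snd x) + del  *  fst (snd (snd x))  *  snd (snd (snd x)) - e  *  snd (snd (snd x))  *  fst x))"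
  by (rule ext) (simp add: bee_rhs_def case_prod_beta)

lemma F_deriv:
  fixes b lam gam m mu r n p h bet del e I5 M5 N5 :: real
  assumes I5: "I5 > 0" and h: "h > 0"
  shows "(bee_rhs b lam gam m mu r n p h bet del e has_derivative (\<lambda>k.
     ((b/I5 - lam * N5 - gam * I5 - m)  *  fst k,
      (-b/I5 + lam * N5 + gam * I5)  *  fst k - (m+mu)  *  fst (snd k),
      (p * M5 * (M5+N5)/(h * I5^2) - e * M5)  *  fst k + (p * M5 * (M5+N5)/(h * I5^2) - bet * M5)  *  fst (snd k)
        + (r - n - p * (2 * M5+N5)/(h * I5) - bet * I5 - del * N5)  *  fst (snd (snd k))
        + (r - p * M5/(h * I5) - del * M5)  *  snd (snd (snd k)),
      (p * N5 * (M5+N5)/(h * I5^2) - e * N5)  *  fst k + (p * N5 * (M5+N5)/(h * I5^2) + bet * M5)  *  fst (snd k)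
        + (bet * I5 - p * N5/(h * I5) + del * N5)  *  fst (snd (snd k))
        + (-n - p * (M5+2 * N5)/(h * I5) + del * M5)  *  snd (snd (snd k))))) (at (0, I5, M5, N5))"
  unfolding bee_alt
  apply (rule has_derivative_eq_rhs)
   apply (rule derivative_eq_intros refl | (use I5 h in simp; fail))+
  apply (rule ext)
  using I5 h apply (simp add: field_simps power2_eq_square)
  done


lemma DVq_split: "DVq K1 K2 a11 a12 a21 a22 u v w z k1 k2 k3 k4 =
   DVq K1 K2 a11 a12 a21 a22 u v w z j1 j2 j3 j4 + DVq K1 K2 a11 a12 a21 a22 u v w z (k1-j1) (k2-j2) (k3-j3) (k4-j4)"
  by (simp add: DVq_def algebra_simps)

lemma abs_mul_le: fixes a b A B :: real
  assumes "\<bar>a\<bar> \<le> A" "\<bar>b\<bar> \<le> B" shows "\<bar>a * b\<bar> \<le> A * B"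
  using assms by (simp add: abs_mult mult_mono')

lemma abs4: fixes a b c d :: real shows "\<bar>a+b+c+d\<bar> \<le> \<bar>a\<bar>+\<bar>b\<bar>+\<bar>c\<bar>+\<bar>d\<bar>"
  by linarith

lemma abs3: fixes a b c :: real shows "\<bar>a+b+c\<bar> \<le> \<bar>a\<bar>+\<bar>b\<bar>+\<bar>c\<bar>"
  by linarith

lemma DVq_bound:
  fixes K1 K2 a11 a12 a21 a22 u v w z k1 k2 k3 k4 N H :: real
  assumes K: "K1 \<ge> 0" "K2 \<ge> 0"
    and b: "\<bar>u\<bar> \<le> N" "\<bar>v\<bar> \<le> N" "\<bar>w\<bar> \<le> N" "\<bar>z\<bar> \<le> N"
    and k: "\<bar>k1\<bar> \<le> H" "\<bar>k2\<bar> \<le> H" "\<bar>k3\<bar> \<le> H" "\<bar>k4\<bar> \<le> H"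
  shows "\<bar>DVq K1 K2 a11 a12 a21 a22 u v w z k1 k2 k3 k4\<bar>
     \<le> (2 * K1 + 2 * K2 + 4 * (\<bar>a11 * a22-a12 * a21\<bar> + (\<bar>a11\<bar>+\<bar>a12\<bar>+\<bar>a21\<bar>+\<bar>a22\<bar>) * (\<bar>a11\<bar>+\<bar>a12\<bar>+\<bar>a21\<bar>+\<bar>a22\<bar>)))  *  N  *  H"
proof -
  define A where "A = \<bar>a11\<bar>+\<bar>a12\<bar>+\<bar>a21\<bar>+\<bar>a22\<bar>"
  define Dt where "Dt = a11 * a22-a12 * a21"
  define s where "s = a11 * w+a12 * z"
  define t where "t = a21 * w+a22 * z"
  have N0: "N \<ge> 0" using b(1) by linarith
  have H0: "H \<ge> 0" using k(1) by linarith
  have s: "\<bar>s\<bar> \<le> A * N"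
  proof -
    have "\<bar>s\<bar> \<le> \<bar>a11 * w\<bar> + \<bar>a12 * z\<bar>" unfolding s_def by (rule abs_triangle_ineq)
    also have "\<dots> \<le> \<bar>a11\<bar> * N + \<bar>a12\<bar> * N" using b by (intro add_mono abs_mul_le) auto
    also have "\<dots> \<le> A * N" unfolding A_def using N0 by (simp add: algebra_simps mult_right_mono)
    finally show ?thesis .
  qed
  have t: "\<bar>t\<bar> \<le> A * N"
  proof -
    have "\<bar>t\<bar> \<le> \<bar>a21 * w\<bar> + \<bar>a22 * z\<bar>" unfolding t_def by (rule abs_triangle_ineq)
    also have "\<dots> \<le> \<bar>a21\<bar> * N + \<bar>a22\<bar> * N" using b by (intro add_mono abs_mul_le) auto
    also have "\<dots> \<le> A * N" unfolding A_def using N0 by (simp add: algebra_simps mult_right_mono)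
    finally show ?thesis .
  qed
  have p: "\<bar>Dt * q + x * s + y * t\<bar> \<le> (\<bar>Dt\<bar> + A * A) * N" if q: "\<bar>q\<bar> \<le> N" and xy: "\<bar>x\<bar>+\<bar>y\<bar> \<le> A" for q x y
  proof -
    have "\<bar>Dt * q + x * s + y * t\<bar> \<le> \<bar>Dt * q\<bar> + \<bar>x * s\<bar> + \<bar>y * t\<bar>" by (rule abs3)
    also have "\<dots> \<le> \<bar>Dt\<bar> * N + \<bar>x\<bar> * (A * N) + \<bar>y\<bar> * (A * N)" using q s t by (intro add_mono abs_mul_le) auto
    also have "\<dots> = \<bar>Dt\<bar> * N + (\<bar>x\<bar>+\<bar>y\<bar>) * (A * N)" by (simp add: algebra_simps)
    also have "\<dots> \<le> \<bar>Dt\<bar> * N + A * (A * N)" using xy N0 A_def by (intro add_left_mono mult_right_mono) auto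
    finally show ?thesis by (simp add: algebra_simps)
  qed
  have p1: "\<bar>(Dt * w + a11 * s + a21 * t) * k3\<bar> \<le> ((\<bar>Dt\<bar> + A * A) * N) * H"
    by (rule abs_mul_le[OF p k(3)]) (use b A_def in auto)
  have p2: "\<bar>(Dt * z + a12 * s + a22 * t) * k4\<bar> \<le> ((\<bar>Dt\<bar> + A * A) * N) * H"
    by (rule abs_mul_le[OF p k(4)]) (use b A_def in auto)
  have u1: "\<bar>u * k1\<bar> \<le> N * H" by (rule abs_mul_le[OF b(1) k(1)])
  have v1: "\<bar>v * k2\<bar> \<le> N * H" by (rule abs_mul_le[OF b(2) k(2)])
  have "DVq K1 K2 a11 a12 a21 a22 u v w z k1 k2 k3 k4 =
     2 * K1 * (u * k1) + 2 * K2 * (v * k2) + 2 * ((Dt * w + a11 * s + a21 * t) * k3) + 2 * ((Dt * z + a12 * s + a22 * t) * k4)"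
    unfolding DVq_def Dt_def s_def t_def by (simp add: algebra_simps)
  also have "\<bar>\<dots>\<bar> \<le> 2 * K1 * \<bar>u * k1\<bar> + 2 * K2 * \<bar>v * k2\<bar> + 2 * \<bar>(Dt * w + a11 * s + a21 * t) * k3\<bar> + 2 * \<bar>(Dt * z + a12 * s + a22 * t) * k4\<bar>"
    using abs4[of "2 * K1 * (u * k1)" "2 * K2 * (v * k2)" "2 * ((Dt * w + a11 * s + a21 * t) * k3)" "2 * ((Dt * z + a12 * s + a22 * t) * k4)"] K by (simp add: abs_mult)
  also have "\<dots> \<le> 2 * K1 * (N * H) + 2 * K2 * (N * H) + 2 * (((\<bar>Dt\<bar> + A * A) * N) * H) + 2 * (((\<bar>Dt\<bar> + A * A) * N) * H)"
    using K u1 v1 p1 p2 by (intro add_mono mult_left_mono) auto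
  also have "\<dots> = (2 * K1 + 2 * K2 + 4 * (\<bar>Dt\<bar> + A * A))  *  N  *  H" by (simp add: algebra_simps)
  finally show ?thesis unfolding Dt_def A_def .
qed

lemma Vq_lower:
  fixes K1 K2 a11 a12 a21 a22 u v w z :: real
  assumes "K1 > 0" "K2 > 0" "a11 * a22-a12 * a21 > 0"
  shows "min K1 (min K2 (a11 * a22-a12 * a21))  *  (u^2+v^2+w^2+z^2) \<le> Vq K1 K2 a11 a12 a21 a22 u v w z"
proof -
  define \<alpha> where "\<alpha> = min K1 (min K2 (a11 * a22-a12 * a21))"
  have "\<alpha>  *  u^2 \<le> K1 * u^2" unfolding \<alpha>_def by (intro mult_right_mono) auto
  moreover have "\<alpha>  *  v^2 \<le> K2 * v^2" unfolding \<alpha>_def by (intro mult_right_mono) auto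
  moreover have "\<alpha>  *  (w^2+z^2) \<le> (a11 * a22-a12 * a21) * (w^2+z^2)" unfolding \<alpha>_def by (intro mult_right_mono) auto
  moreover have "0 \<le> (a11 * w+a12 * z)^2 + (a21 * w+a22 * z)^2" by simp
  moreover have "Vq K1 K2 a11 a12 a21 a22 u v w z = K1 * u^2 + K2 * v^2 + (a11 * a22-a12 * a21) * (w^2+z^2) + ((a11 * w+a12 * z)^2 + (a21 * w+a22 * z)^2)"
    unfolding Vq_def by simp
  moreover have "\<alpha> * (u^2+v^2+w^2+z^2) = \<alpha> * u^2 + \<alpha> * v^2 + \<alpha> * (w^2+z^2)" by (simp add: algebra_simps)
  ultimately show ?thesis unfolding \<alpha>_def[symmetric] by linarith
qed

lemma Vq_upper:
  fixes K1 K2 a11 a12 a21 a22 u v w z :: real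
  assumes "K1 > 0" "K2 > 0" "a11 * a22-a12 * a21 > 0"
  shows "Vq K1 K2 a11 a12 a21 a22 u v w z \<le> (K1+K2+(a11 * a22-a12 * a21)+(a11^2+a12^2+a21^2+a22^2))  *  (u^2+v^2+w^2+z^2)"
proof -
  have s: "(a11 * w+a12 * z)^2 \<le> (a11^2+a12^2) * (w^2+z^2)"
  proof -
    have "0 \<le> (a11 * z - a12 * w)^2" by simp
    thus ?thesis by (simp add: power2_eq_square algebra_simps)
  qed
  have t: "(a21 * w+a22 * z)^2 \<le> (a21^2+a22^2) * (w^2+z^2)"
  proof -
    have "0 \<le> (a21 * z - a22 * w)^2" by simp
    thus ?thesis by (simp add: power2_eq_square algebra_simps)
  qed
  have "0 \<le> K1 * (v^2+w^2+z^2)" using assms by simp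
  moreover have "0 \<le> K2 * (u^2+w^2+z^2)" using assms by simp
  moreover have "0 \<le> (a11 * a22-a12 * a21) * (u^2+v^2)" using assms by simp
  moreover have "0 \<le> (a11^2+a12^2+a21^2+a22^2) * (u^2+v^2)" by simp
  moreover have "Vq K1 K2 a11 a12 a21 a22 u v w z = K1 * u^2 + K2 * v^2 + (a11 * a22-a12 * a21) * (w^2+z^2) + ((a11 * w+a12 * z)^2 + (a21 * w+a22 * z)^2)"
    unfolding Vq_def by simp
  moreover have "(K1+K2+(a11 * a22-a12 * a21)+(a11^2+a12^2+a21^2+a22^2)) * (u^2+v^2+w^2+z^2)
     = K1 * u^2 + K2 * v^2 + (a11 * a22-a12 * a21) * (w^2+z^2) + (a11^2+a12^2) * (w^2+z^2) + (a21^2+a22^2) * (w^2+z^2)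
       + K1 * (v^2+w^2+z^2) + K2 * (u^2+w^2+z^2) + (a11 * a22-a12 * a21) * (u^2+v^2) + (a11^2+a12^2+a21^2+a22^2) * (u^2+v^2)"
    by (simp add: algebra_simps)
  ultimately show ?thesis using s t by linarith
qed

lemma comps_le: fixes k :: state
  shows "\<bar>fst k\<bar> \<le> norm k" "\<bar>fst (snd k)\<bar> \<le> norm k" "\<bar>fst (snd (snd k))\<bar> \<le> norm k" "\<bar>snd (snd (snd k))\<bar> \<le> norm k"
proof -
  have n: "(norm k)^2 = (fst k)^2 + (fst (snd k))^2 + (fst (snd (snd k)))^2 + (snd (snd (snd k)))^2" by (rule norm4)
  have a: "\<bar>q\<bar> \<le> norm k" if "q^2 \<le> (norm k)^2" for q
    using that abs_le_square_iff[of q "norm k"] by simp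
  show "\<bar>fst k\<bar> \<le> norm k" by (rule a) (use n in \<open>simp\<close>)
  show "\<bar>fst (snd k)\<bar> \<le> norm k" by (rule a) (use n in \<open>simp\<close>)
  show "\<bar>fst (snd (snd k))\<bar> \<le> norm k" by (rule a) (use n in \<open>simp\<close>)
  show "\<bar>snd (snd (snd k))\<bar> \<le> norm k" by (rule a) (use n in \<open>simp\<close>)
qed


theorem mainTheorem7:
  fixes b lam gam m mu r n p h bet del e I5 M5 N5 :: real
  assumes pos: "b > 0" "lam > 0" "gam > 0" "m > 0" "mu > 0" "r > 0" "n > 0" "p > 0"
      "h > 0" "bet > 0" "del > 0" "e > 0"
    and I5: "I5 > 0" and M5: "M5 \<ge> 0" and N5: "N5 \<ge> 0"
    and equil: "bee_rhs b lam gam m mu r n p h bet del e (0, I5, M5, N5) = (0, 0, 0, 0)"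
    and c1: "b / I5 < gam * I5 + m + lam * N5"
    and c2: "2 * n + 3 * p * (M5 + N5) / (h * I5) + bet * I5 + del * N5 > r + del * M5"
    and c3: "(r - n - p * (2 * M5 + N5) / (h * I5) - bet * I5 - del * N5)
               * (del * M5 - n - p * (M5 + 2 * N5) / (h * I5))
             + (bet * I5 - p * N5 / (h * I5) + del * N5) * (p * M5 / (h * I5) + del * M5 - r) > 0"
  shows "locally_asymptotically_stable (bee_rhs b lam gam m mu r n p h bet del e) D0 (0, I5, M5, N5)"
proof -
  define F where "F = bee_rhs b lam gam m mu r n p h bet del e"
  define E :: state where "E = (0, I5, M5, N5)"
  define lam0 where "lam0 = b/I5 - lam * N5 - gam * I5 - m"
  define aa where "aa = -b/I5 + lam * N5 + gam * I5"
  define mu0 where "mu0 = m+mu"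
  define cc1 where "cc1 = p * M5 * (M5+N5)/(h * I5^2) - e * M5"
  define d1 where "d1 = p * M5 * (M5+N5)/(h * I5^2) - bet * M5"
  define cc2 where "cc2 = p * N5 * (M5+N5)/(h * I5^2) - e * N5"
  define d2 where "d2 = p * N5 * (M5+N5)/(h * I5^2) + bet * M5"
  define a11 where "a11 = r - n - p * (2 * M5+N5)/(h * I5) - bet * I5 - del * N5"
  define a12 where "a12 = r - p * M5/(h * I5) - del * M5"
  define a21 where "a21 = bet * I5 - p * N5/(h * I5) + del * N5"
  define a22 where "a22 = -n - p * (M5+2 * N5)/(h * I5) + del * M5"
  define J where "J = (\<lambda>k::state. (lam0  *  fst k, aa  *  fst k - mu0  *  fst (snd k),
      cc1  *  fst k + d1  *  fst (snd k) + a11  *  fst (snd (snd k)) + a12  *  snd (snd (snd k)),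
      cc2  *  fst k + d2  *  fst (snd k) + a21  *  fst (snd (snd k)) + a22  *  snd (snd (snd k))))"
  have Fder: "(F has_derivative J) (at E)"
    unfolding F_def E_def J_def lam0_def aa_def mu0_def cc1_def d1_def cc2_def d2_def a11_def a12_def a21_def a22_def
    by (rule F_deriv[OF I5 pos(9)])
  have FE: "F E = 0" using equil unfolding F_def E_def by (simp add: zero_prod_def)
  have l0: "lam0 < 0" using c1 unfolding lam0_def by linarith
  have m0: "mu0 > 0" unfolding mu0_def using pos by simp
  have tr: "a11 + a22 < 0"
  proof -
    have "p * (2 * M5+N5)/(h * I5) + p * (M5+2 * N5)/(h * I5) = 3 * p * (M5+N5)/(h * I5)"
      by (simp add: add_divide_distrib[symmetric] algebra_simps)
    thus ?thesis using c2 unfolding a11_def a22_def by linarith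
  qed
  have dt: "a11 * a22 - a12 * a21 > 0"
  proof -
    have e22: "a22 = del * M5 - n - p * (M5 + 2 * N5) / (h * I5)" unfolding a22_def by simp
    have e12: "p * M5 / (h * I5) + del * M5 - r = - a12" unfolding a12_def by simp
    have "a11 * a22 + a21 * (- a12) > 0"
      using c3 unfolding a11_def[symmetric] e22[symmetric] a21_def[symmetric] e12 .
    thus ?thesis by (simp add: algebra_simps)
  qed
  obtain K1 K2 c where K1: "K1 > 0" and K2: "K2 > 0" and cpos: "c > 0" and qb: "\<And>u v w z.
     DVq K1 K2 a11 a12 a21 a22 u v w z (lam0 * u) (aa * u - mu0 * v)
        (cc1 * u+d1 * v+a11 * w+a12 * z) (cc2 * u+d2 * v+a21 * w+a22 * z) \<le> -c * (u^2+v^2+w^2+z^2)"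
    using quad_bound[OF l0 m0 tr dt, of aa cc1 d1 cc2 d2] by blast
  define Dt where "Dt = a11 * a22-a12 * a21"
  define A where "A = \<bar>a11\<bar>+\<bar>a12\<bar>+\<bar>a21\<bar>+\<bar>a22\<bar>"
  define \<alpha> where "\<alpha> = min K1 (min K2 Dt)"
  define \<beta> where "\<beta> = K1+K2+Dt+(a11^2+a12^2+a21^2+a22^2)"
  define Lc where "Lc = 2 * K1 + 2 * K2 + 4 * (\<bar>Dt\<bar> + A * A)"
  have Dt0: "Dt > 0" using dt Dt_def by simp
  have al: "\<alpha> > 0" unfolding \<alpha>_def using K1 K2 Dt0 by simp
  have be: "\<beta> > 0" unfolding \<beta>_def using K1 K2 Dt0 by (simp add: add_pos_nonneg)
  have Lc0: "Lc > 0" unfolding Lc_def using K1 K2 by (simp add: add_pos_nonneg)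
  define V where "V x = Vq K1 K2 a11 a12 a21 a22 (fst x - 0) (fst (snd x) - I5) (fst (snd (snd x)) - M5) (snd (snd (snd x)) - N5)" for x :: state
  define W where "W x = DVq K1 K2 a11 a12 a21 a22 (fst x - 0) (fst (snd x) - I5) (fst (snd (snd x)) - M5) (snd (snd (snd x)) - N5)
      (fst (F x)) (fst (snd (F x))) (fst (snd (snd (F x)))) (snd (snd (snd (F x))))" for x :: state
  have sq: "(dist x E)^2 = (fst x - 0)^2 + (fst (snd x) - I5)^2 + (fst (snd (snd x)) - M5)^2 + (snd (snd (snd x)) - N5)^2" for x
    using dist4[of x E] unfolding E_def by simp
  have lower: "\<alpha>  *  (dist x E)^2 \<le> V x" for x
    unfolding sq V_def \<alpha>_def Dt_def by (rule Vq_lower[OF K1 K2 dt])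
  have upper: "V x \<le> \<beta>  *  (dist x E)^2" for x
    unfolding sq V_def \<beta>_def Dt_def by (rule Vq_upper[OF K1 K2 dt])
  have alle: "\<forall>e>0. \<exists>d>0. \<forall>y. norm (y - E) < d \<longrightarrow> norm (F y - F E - J (y - E)) \<le> e * norm (y - E)"
    using Fder unfolding has_derivative_at_alt by blast
  have epos: "c/(2 * Lc) > 0" using cpos Lc0 by simp
  obtain d where d0: "d > 0" and dR0: "\<forall>y. norm (y - E) < d \<longrightarrow> norm (F y - F E - J (y - E)) \<le> c/(2 * Lc) * norm (y - E)"
    using alle[rule_format, OF epos] by blast
  have dR: "norm (F y - F E - J (y - E)) \<le> c/(2 * Lc) * norm (y - E)" if "norm (y - E) < d" for y
    using dR0 that by blast
  have decr: "W x \<le> -(c/(2 * \<beta>))  *  V x" if "x \<in> D0" "dist x E < d" for x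
  proof -
    define u where "u = fst x - 0"
    define v where "v = fst (snd x) - I5"
    define w where "w = fst (snd (snd x)) - M5"
    define z where "z = snd (snd (snd x)) - N5"
    define N where "N = dist x E"
    define R where "R = F x - F E - J (x - E)"
    have N0: "N \<ge> 0" unfolding N_def by simp
    have Jc: "J (x - E) = (lam0 * u, aa * u - mu0 * v, cc1 * u+d1 * v+a11 * w+a12 * z, cc2 * u+d2 * v+a21 * w+a22 * z)"
      unfolding J_def E_def u_def v_def w_def z_def by simp
    have Rc: "fst R = fst (F x) - lam0 * u" "fst (snd R) = fst (snd (F x)) - (aa * u - mu0 * v)"
      "fst (snd (snd R)) = fst (snd (snd (F x))) - (cc1 * u+d1 * v+a11 * w+a12 * z)"
      "snd (snd (snd R)) = snd (snd (snd (F x))) - (cc2 * u+d2 * v+a21 * w+a22 * z)"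
      unfolding R_def FE Jc by simp_all
    have NN: "N^2 = u^2+v^2+w^2+z^2" unfolding N_def u_def v_def w_def z_def by (rule sq)
    have nd: "norm (x - E) = N" unfolding N_def by (simp add: dist_norm)
    have Hb: "norm R \<le> c/(2 * Lc)  *  N" unfolding R_def using dR[of x] that(2)[folded N_def] nd by simp
    have ub: "\<bar>u\<bar> \<le> N" "\<bar>v\<bar> \<le> N" "\<bar>w\<bar> \<le> N" "\<bar>z\<bar> \<le> N"
      using comps_le[of "x - E"] unfolding nd by (simp_all add: E_def u_def v_def w_def z_def)
    have kb: "\<bar>fst (F x) - lam0 * u\<bar> \<le> norm R" "\<bar>fst (snd (F x)) - (aa * u - mu0 * v)\<bar> \<le> norm R"
      "\<bar>fst (snd (snd (F x))) - (cc1 * u+d1 * v+a11 * w+a12 * z)\<bar> \<le> norm R"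
      "\<bar>snd (snd (snd (F x))) - (cc2 * u+d2 * v+a21 * w+a22 * z)\<bar> \<le> norm R"
      using comps_le[of R] unfolding Rc by simp_all
    have split: "W x = DVq K1 K2 a11 a12 a21 a22 u v w z (lam0 * u) (aa * u - mu0 * v)
        (cc1 * u+d1 * v+a11 * w+a12 * z) (cc2 * u+d2 * v+a21 * w+a22 * z)
      + DVq K1 K2 a11 a12 a21 a22 u v w z (fst (F x) - lam0 * u) (fst (snd (F x)) - (aa * u - mu0 * v))
        (fst (snd (snd (F x))) - (cc1 * u+d1 * v+a11 * w+a12 * z)) (snd (snd (snd (F x))) - (cc2 * u+d2 * v+a21 * w+a22 * z))"
      unfolding W_def u_def[symmetric] v_def[symmetric] w_def[symmetric] z_def[symmetric] by (rule DVq_split)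
    have t2: "DVq K1 K2 a11 a12 a21 a22 u v w z (fst (F x) - lam0 * u) (fst (snd (F x)) - (aa * u - mu0 * v))
        (fst (snd (snd (F x))) - (cc1 * u+d1 * v+a11 * w+a12 * z)) (snd (snd (snd (F x))) - (cc2 * u+d2 * v+a21 * w+a22 * z))
       \<le> Lc  *  N  *  norm R"
      by (rule order_trans[OF abs_ge_self], unfold Lc_def A_def Dt_def, rule DVq_bound[OF less_imp_le[OF K1] less_imp_le[OF K2] ub kb])
    have "Lc  *  N  *  norm R \<le> Lc  *  N  *  (c/(2 * Lc)  *  N)" using Hb Lc0 N0 by (intro mult_left_mono) auto
    also have "\<dots> = c/2  *  N^2" using Lc0 by (simp add: power2_eq_square field_simps)
    finally have t2': "Lc  *  N  *  norm R \<le> c/2  *  N^2" .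
    have "W x \<le> -c * (u^2+v^2+w^2+z^2) + c/2  *  N^2" unfolding split using qb[of u v w z] t2 t2' by linarith
    also have "\<dots> = -(c/2)  *  N^2" unfolding NN by (simp add: algebra_simps)
    also have "\<dots> \<le> -(c/(2 * \<beta>))  *  V x"
    proof -
      have "V x \<le> \<beta>  *  N^2" unfolding N_def by (rule upper)
      hence "(c/(2 * \<beta>))  *  V x \<le> (c/(2 * \<beta>))  *  (\<beta>  *  N^2)" using cpos be by (intro mult_left_mono) auto
      also have "\<dots> = c/2  *  N^2" using be by (simp add: field_simps)
      finally show ?thesis by simp
    qed
    finally show ?thesis .
  qed
  have chain: "((\<lambda>s. V (x s)) has_real_derivative W (x t)) (at t within {0..})"
    if sol: "is_solution F D0 x" and t0: "t \<ge> 0" for x t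
  proof -
    have "(x has_vector_derivative F (x t)) (at t within {0..})" using sol t0 unfolding is_solution_def by blast
    thus ?thesis unfolding V_def W_def by (rule chain_Vq)
  qed
  have "locally_asymptotically_stable F D0 E"
    by (rule lyap_LAS[OF al be _ d0 lower upper decr chain]) (use cpos be in simp)
  thus ?thesis unfolding F_def E_def .
qed

end
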